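(* Let $\beta\in(0,\infty)$ and, for each $N\ge1$, let $K=K_N$ be a positive integer with $K_N/N\to\beta$. Let $\boldsymbol{S}\in\mathbb{R}^{N\times K}$ be a random time-hopping matrix with $N_{\mathsf s}=1$: its columns are independent, $\boldsymbol{s}_k=\epsilon_k\boldsymbol{e}_{\pi_k}$ with $\pi_k$ uniform on $\{1,\dots,N\}$ and $\epsilon_k$ uniform on $\{-1,+1\}$, all independent. Let $\lambda_1,\dots,\lambda_N$ be the eigenvalues of $\boldsymbol{S}\boldsymbol{S}^{\mathsf T}$ and let $F_N(x):=\frac1N\sum_{n=1}^N \mathbb{1}\{\lambda_n\le x\}$ be its empirical spectral distribution. Then for every $x\in\mathbb{R}$, as $N\to\infty$, \[ F_N(x)\ \xrightarrow{p}\ F(x):=\sum_{k\ge0}\frac{\beta^k e^{-\beta}}{k!}\,\mathbb{1}\{k\le x\}, \] i.e. the empirical spectral distribution converges in probability to the distribution function of a Poisson law with mean $\beta$.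
   Context: $\boldsymbol{e}_i$ denotes the $i$th standard basis vector of $\mathbb{R}^N$; $\xrightarrow{p}$ denotes convergence in probability. *)

theory Defs
  imports "HOL-Probability.Probability" "Jordan_Normal_Form.Char_Poly"
begin

text \<open>Sample space for the time-hopping matrix with N rows, K columns, N_s = 1:
  an outcome assigns to each column k < K a pair (pi_k, eps_k) with pi_k uniform on the
  row indices {0..<N} (0-based) and eps_k uniform on {-1,+1}; all independent.\<close>
definition th_law :: "nat \<Rightarrow> nat \<Rightarrow> (nat \<Rightarrow> nat \<times> real) pmf" where
  "th_law N K = Pi_pmf {..<K} (0, 1) (\<lambda>k. pmf_of_set ({0..<N} \<times> {-1, 1}))"

definition th_matrix :: "nat \<Rightarrow> nat \<Rightarrow> (nat \<Rightarrow> nat \<times> real) \<Rightarrow> real mat" where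
  "th_matrix N K \<omega> = mat N K (\<lambda>(i, k). if fst (\<omega> k) = i then snd (\<omega> k) else 0)"

definition esd :: "nat \<Rightarrow> real mat \<Rightarrow> real \<Rightarrow> real" where
  "esd N A x = (\<Sum>t\<in>{t. poly (char_poly A) t = 0 \<and> t \<le> x}.
                   real (order t (char_poly A))) / real N"

definition poisson_cdf :: "real \<Rightarrow> real \<Rightarrow> real" where
  "poisson_cdf \<beta> x = (\<Sum>k. if real k \<le> x then \<beta> ^ k * exp (- \<beta>) / fact k else 0)"

end

theory Submission
  imports Defs
begin

lemma order_lin_prod:
  fixes L :: "real list"
  shows "order t (\<Prod>a\<leftarrow>L. [:- a, 1:]) = count_list L t"
proof (induction L)
  case Nil
  then show ?case by (simp add: order_0I)
next
  case (Cons a L)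
  have nz: "(\<Prod>a\<leftarrow>L. [:- a, 1:]) \<noteq> 0"
    by (subst prod_list_zero_iff) auto
  have "order t ([:- a, 1:] * (\<Prod>a\<leftarrow>L. [:- a, 1:])) = order t [:- a, 1:] + order t (\<Prod>a\<leftarrow>L. [:- a, 1:])"
  proof -
    have "[:- a, 1:] \<noteq> (0::real poly)" by simp
    hence "[:- a, 1:] * (\<Prod>a\<leftarrow>L. [:- a, 1:]) \<noteq> 0" using nz by (metis no_zero_divisors)
    thus ?thesis by (rule order_mult)
  qed
  moreover have "order t [:- a, 1:] = (if a = t then 1 else 0)"
  proof (cases "a = t")
    case True
    then show ?thesis using order_power_n_n[of t 1] by simp
  next
    case False
    then show ?thesis by (simp add: order_0I)
  qed
  ultimately show ?case using Cons by auto
qed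

lemma poly_lin_prod:
  fixes L :: "real list"
  shows "poly (\<Prod>a\<leftarrow>L. [:- a, 1:]) t = 0 \<longleftrightarrow> t \<in> set L"
  by (induction L) auto

lemma count_sum_list:
  fixes L :: "real list"
  assumes "finite T"
  shows "(\<Sum>t\<in>T. real (count_list L t)) = real (length (filter (\<lambda>a. a \<in> T) L))"
  using assms
proof (induction L)
  case Nil
  then show ?case by simp
next
  case (Cons a L)
  have "(\<Sum>t\<in>T. real (count_list (a#L) t)) = (\<Sum>t\<in>T. real (count_list L t) + (if a = t then 1 else 0))"
    by (intro sum.cong) auto
  also have "\<dots> = (\<Sum>t\<in>T. real (count_list L t)) + (if a \<in> T then 1 else 0)"
    using Cons.prems by (simp add: sum.distrib)
  finally show ?case using Cons by simp
qed

lemma filter_upt_card: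
  "real (length (filter P (map f [0..<N]))) = (\<Sum>i<N. if P (f i) then 1 else 0)"
  by (induction N) auto

lemma esd_diag:
  fixes A :: "real mat"
  assumes A: "A \<in> carrier_mat N N" and d: "\<And>i j. i < N \<Longrightarrow> j < N \<Longrightarrow> i \<noteq> j \<Longrightarrow> A $$ (i,j) = 0"
  shows "esd N A x = (\<Sum>i<N. if A $$ (i,i) \<le> x then 1 else 0) / real N"
proof -
  have ut: "upper_triangular A" using A d unfolding upper_triangular_def by auto
  have cp: "char_poly A = (\<Prod> a \<leftarrow> diag_mat A. [:- a, 1:])"
    using char_poly_upper_triangular[OF A ut] .
  let ?L = "diag_mat A"
  have L: "?L = map (\<lambda>i. A $$ (i,i)) [0..<N]" using A unfolding diag_mat_def by auto
  have "{t. poly (char_poly A) t = 0 \<and> t \<le> x} = {t. t \<in> set ?L \<and> t \<le> x}"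
    unfolding cp poly_lin_prod by simp
  hence "esd N A x = (\<Sum>t\<in>{t. t \<in> set ?L \<and> t \<le> x}. real (count_list ?L t)) / real N"
    unfolding esd_def cp order_lin_prod by simp
  also have "(\<Sum>t\<in>{t. t \<in> set ?L \<and> t \<le> x}. real (count_list ?L t)) = real (length (filter (\<lambda>a. a \<in> {t. t \<in> set ?L \<and> t \<le> x}) ?L))"
    by (rule count_sum_list) auto
  also have "filter (\<lambda>a. a \<in> {t. t \<in> set ?L \<and> t \<le> x}) ?L = filter (\<lambda>a. a \<le> x) ?L"
    by (rule filter_cong) auto
  finally show ?thesis unfolding L filter_upt_card by simp
qed

lemma choose2_zero: "n < a + b \<Longrightarrow> (n choose a) * ((n - a) choose b) = 0"
  by (cases "a \<le> n") auto

lemma coef_rec: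
  "(Suc n choose a) * ((Suc n - a) choose b) =
     (if a = 0 then 0 else (n choose (a-1)) * ((n - (a-1)) choose b))
   + (if b = 0 then 0 else (n choose a) * ((n - a) choose (b-1)))
   + (n choose a) * ((n - a) choose b)"
proof (cases "a \<le> n")
  case True
  hence sn: "Suc n - a = Suc (n - a)" by auto
  have B: "(Suc (n - a) choose b) = (if b = 0 then 0 else ((n - a) choose (b-1))) + ((n - a) choose b)"
    by (cases b) auto
  show ?thesis
  proof (cases a)
    case 0
    then show ?thesis using B by simp
  next
    case (Suc a')
    have "n - a' = Suc (n - a)" using True Suc by auto
    then show ?thesis using Suc B sn by (simp add: algebra_simps)
  qed
next
  case False
  show ?thesis
  proof (cases "a = Suc n")
    case True
    then show ?thesis using False by (cases b) auto
  next
    case False2: False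
    hence "Suc n < a" using False by simp
    then obtain c where c: "a = Suc (Suc n + c)" using less_imp_Suc_add by blast
    show ?thesis unfolding c by (simp add: binomial_eq_0)
  qed
qed

lemma trinom_rec:
  fixes u v r :: real
  defines "T \<equiv> \<lambda>n a b. real (n choose a) * real ((n - a) choose b) * u ^ a * v ^ b * r ^ (n - a - b)"
  shows "T (Suc n) a b = u * (if a = 0 then 0 else T n (a-1) b) + v * (if b = 0 then 0 else T n a (b-1)) + r * T n a b"
proof -
  define W where "W = u ^ a * v ^ b * r ^ (Suc n - a - b)"
  have c: "real ((Suc n choose a) * ((Suc n - a) choose b)) =
     (if a = 0 then 0 else real ((n choose (a-1)) * ((n - (a-1)) choose b)))
   + (if b = 0 then 0 else real ((n choose a) * ((n - a) choose (b-1))))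
   + real ((n choose a) * ((n - a) choose b))"
    by (subst coef_rec) simp
  have t1: "u * (if a = 0 then 0 else T n (a-1) b) = (if a = 0 then 0 else real ((n choose (a-1)) * ((n - (a-1)) choose b))) * W"
  proof (cases "a = 0")
    case False
    show ?thesis
    proof (cases "n < (a - 1) + b")
      case True
      then show ?thesis using choose2_zero[OF True] False unfolding T_def by (cases "n choose (a-1) = 0") auto
    next
      case F2: False
      hence e: "n - (a-1) - b = Suc n - a - b" using False by auto
      have "u * u ^ (a-1) = u ^ a" using False by (metis Suc_pred' bot_nat_0.not_eq_extremum power_Suc)
      then show ?thesis using False unfolding T_def W_def e by (simp add: algebra_simps)
    qed
  qed simp
  have t2: "v * (if b = 0 then 0 else T n a (b-1)) = (if b = 0 then 0 else real ((n choose a) * ((n - a) choose (b-1)))) * W"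
  proof (cases "b = 0")
    case False
    show ?thesis
    proof (cases "n < a + (b - 1)")
      case True
      then show ?thesis using choose2_zero[OF True] False unfolding T_def by (cases "n choose a = 0") auto
    next
      case F2: False
      hence e: "n - a - (b-1) = Suc n - a - b" using False by auto
      have "v * v ^ (b-1) = v ^ b" using False by (metis Suc_pred' bot_nat_0.not_eq_extremum power_Suc)
      then show ?thesis using False unfolding T_def W_def e by (simp add: algebra_simps)
    qed
  qed simp
  have t3: "r * T n a b = real ((n choose a) * ((n - a) choose b)) * W"
  proof (cases "n < a + b")
    case True
    then show ?thesis using choose2_zero[OF True] unfolding T_def by (cases "n choose a = 0") auto
  next
    case False
    hence e: "Suc n - a - b = Suc (n - a - b)" by auto
    show ?thesis unfolding T_def W_def e by (simp add: algebra_simps)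
  qed
  have "T (Suc n) a b = real ((Suc n choose a) * ((Suc n - a) choose b)) * W"
    unfolding T_def W_def by (simp add: algebra_simps)
  also have "\<dots> = u * (if a = 0 then 0 else T n (a-1) b) + v * (if b = 0 then 0 else T n a (b-1)) + r * T n a b"
    unfolding c t1 t2 t3 by (simp add: algebra_simps)
  finally show ?thesis .
qed

lemma measure_bind_pmf':
  "measure_pmf.prob (bind_pmf M N) X = (\<integral>x. measure_pmf.prob (N x) X \<partial>M)"
proof -
  have "measure_pmf.prob (bind_pmf M N) X = pmf (map_pmf (\<lambda>z. z \<in> X) (bind_pmf M N)) True"
    by (simp add: pmf_map vimage_def)
  also have "\<dots> = pmf (bind_pmf M (\<lambda>x. map_pmf (\<lambda>z. z \<in> X) (N x))) True"
    by (simp add: map_bind_pmf)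
  also have "\<dots> = (\<integral>x. pmf (map_pmf (\<lambda>z. z \<in> X) (N x)) True \<partial>M)"
    by (rule pmf_bind)
  also have "\<dots> = (\<integral>x. measure_pmf.prob (N x) X \<partial>M)"
    by (simp add: pmf_map vimage_def)
  finally show ?thesis .
qed

lemma measure_Pi_insert:
  assumes "finite A" "x \<notin> A"
  shows "measure_pmf.prob (Pi_pmf (insert x A) d P) E =
         (\<integral>y. measure_pmf.prob (Pi_pmf A d P) {f. f(x:=y) \<in> E} \<partial>P x)"
  unfolding Pi_pmf_insert'[OF assms] measure_bind_pmf' map_pmf_def[symmetric] measure_map_pmf vimage_def
  by (rule refl)

lemma integral_3cases:
  fixes P :: "'b pmf"
  assumes "U \<inter> V = {}"
  shows "(\<integral>y. (if y \<in> U then c1 else if y \<in> V then c2 else c3) \<partial>P) =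
    c1 * measure_pmf.prob P U + c2 * measure_pmf.prob P V + c3 * (1 - measure_pmf.prob P U - measure_pmf.prob P V)"
proof -
  have e: "(\<lambda>y. if y \<in> U then c1 else if y \<in> V then c2 else c3) =
        (\<lambda>y. c3 + ((c1 - c3) * indicator U y + (c2 - c3) * indicator V y))"
    using assms by (auto simp: indicator_def fun_eq_iff)
  have iU: "integrable (measure_pmf P) (indicator U :: 'b \<Rightarrow> real)"
    by (rule measure_pmf.integrable_const_bound[where B=1]) (auto simp: indicator_def)
  have iV: "integrable (measure_pmf P) (indicator V :: 'b \<Rightarrow> real)"
    by (rule measure_pmf.integrable_const_bound[where B=1]) (auto simp: indicator_def)
  show ?thesis unfolding e
    using iU iV by (simp add: algebra_simps)
qed

lemma card_upd:
  assumes "x \<notin> A" "finite A"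
  shows "card {k \<in> insert x A. (f(x:=y)) k \<in> U} = (if y \<in> U then 1 else 0) + card {k\<in>A. f k \<in> U}"
proof -
  have "{k \<in> insert x A. (f(x:=y)) k \<in> U} = (if y \<in> U then insert x {k\<in>A. f k \<in> U} else {k\<in>A. f k \<in> U})"
    using assms by auto
  then show ?thesis using assms by auto
qed

lemma count2:
  fixes P :: "'b pmf" and A :: "'a set"
  assumes "finite A" "U \<inter> V = {}"
  shows "measure_pmf.prob (Pi_pmf A d (\<lambda>_. P)) {f. card {k\<in>A. f k \<in> U} = a \<and> card {k\<in>A. f k \<in> V} = b}
     = real (card A choose a) * real ((card A - a) choose b) * measure_pmf.prob P U ^ a * measure_pmf.prob P V ^ b
        * (1 - measure_pmf.prob P U - measure_pmf.prob P V) ^ (card A - a - b)"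
  using assms(1)
proof (induction A arbitrary: a b rule: finite_induct)
  case empty
  then show ?case by (cases "a = 0"; cases "b = 0") auto
next
  case (insert x A)
  define u where "u = measure_pmf.prob P U"
  define v where "v = measure_pmf.prob P V"
  define r where "r = 1 - u - v"
  define T where "T \<equiv> \<lambda>n a b. real (n choose a) * real ((n - a) choose b) * u ^ a * v ^ b * r ^ (n - a - b)"
  define Q where "Q = Pi_pmf A d (\<lambda>_. P)"
  have IH: "\<And>a b. measure_pmf.prob Q {f. card {k\<in>A. f k \<in> U} = a \<and> card {k\<in>A. f k \<in> V} = b} = T (card A) a b"
    using insert.IH unfolding Q_def T_def u_def v_def r_def by simp
  have inner: "measure_pmf.prob Q {f. f(x:=y) \<in> {f. card {k\<in>insert x A. f k \<in> U} = a \<and> card {k\<in>insert x A. f k \<in> V} = b}}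
     = (if y \<in> U then (if a = 0 then 0 else T (card A) (a-1) b) else if y \<in> V then (if b = 0 then 0 else T (card A) a (b-1)) else T (card A) a b)" for y
  proof -
    have s: "{f. f(x:=y) \<in> {f. card {k\<in>insert x A. f k \<in> U} = a \<and> card {k\<in>insert x A. f k \<in> V} = b}}
       = {f. (if y \<in> U then 1 else 0) + card {k\<in>A. f k \<in> U} = a \<and> (if y \<in> V then 1 else 0) + card {k\<in>A. f k \<in> V} = b}"
      by (simp only: mem_Collect_eq card_upd[OF insert.hyps(2,1)])
    show ?thesis
    proof (cases "y \<in> U")
      case True
      hence "y \<notin> V" using assms(2) by auto
      show ?thesis
      proof (cases "a = 0")
        case True
        then show ?thesis unfolding s using \<open>y \<in> U\<close> \<open>y \<notin> V\<close> by simp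
      next
        case False
        hence "{f. (if y \<in> U then 1 else 0) + card {k\<in>A. f k \<in> U} = a \<and> (if y \<in> V then 1 else 0) + card {k\<in>A. f k \<in> V} = b}
          = {f. card {k\<in>A. f k \<in> U} = a - 1 \<and> card {k\<in>A. f k \<in> V} = b}"
          using \<open>y \<in> U\<close> \<open>y \<notin> V\<close> by auto
        then show ?thesis unfolding s using IH False \<open>y \<in> U\<close> by simp
      qed
    next
      case nU: False
      show ?thesis
      proof (cases "y \<in> V")
        case True
        show ?thesis
        proof (cases "b = 0")
          case True
          then show ?thesis unfolding s using \<open>y \<in> V\<close> nU by simp
        next
          case False
          hence "{f. (if y \<in> U then 1 else 0) + card {k\<in>A. f k \<in> U} = a \<and> (if y \<in> V then 1 else 0) + card {k\<in>A. f k \<in> V} = b}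
            = {f. card {k\<in>A. f k \<in> U} = a \<and> card {k\<in>A. f k \<in> V} = b - 1}"
            using \<open>y \<in> V\<close> nU by auto
          then show ?thesis unfolding s using IH False \<open>y \<in> V\<close> nU by simp
        qed
      next
        case False
        then show ?thesis unfolding s using IH nU by simp
      qed
    qed
  qed
  have "measure_pmf.prob (Pi_pmf (insert x A) d (\<lambda>_. P)) {f. card {k\<in>insert x A. f k \<in> U} = a \<and> card {k\<in>insert x A. f k \<in> V} = b}
     = (\<integral>y. (if y \<in> U then (if a = 0 then 0 else T (card A) (a-1) b) else if y \<in> V then (if b = 0 then 0 else T (card A) a (b-1)) else T (card A) a b) \<partial>P)"
    unfolding measure_Pi_insert[OF insert.hyps(1,2)] Q_def[symmetric] inner by simp
  also have "\<dots> = u * (if a = 0 then 0 else T (card A) (a-1) b) + v * (if b = 0 then 0 else T (card A) a (b-1)) + r * T (card A) a b"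
    unfolding integral_3cases[OF assms(2)] u_def v_def r_def by (simp add: algebra_simps)
  also have "\<dots> = T (Suc (card A)) a b"
    unfolding T_def by (rule trinom_rec[symmetric])
  finally show ?case using insert.hyps unfolding T_def u_def v_def r_def by simp
qed

definition dcnt :: "nat \<Rightarrow> nat \<Rightarrow> (nat \<Rightarrow> nat \<times> real) \<Rightarrow> nat" where
  "dcnt K i \<omega> = card {k \<in> {..<K}. fst (\<omega> k) = i}"

definition gg :: "real \<Rightarrow> nat \<Rightarrow> nat \<Rightarrow> nat \<Rightarrow> nat \<Rightarrow> real" where
  "gg c N K a b = real (K choose a) * real ((K - a) choose b) * (1 / real N) ^ (a + b) * (1 - c / real N) ^ (K - a - b)"

lemma base_measure:
  assumes "N \<ge> 1" "i < N"
  shows "measure_pmf.prob (pmf_of_set ({0..<N} \<times> {-1, 1::real})) {y. fst y = i} = 1 / real N"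
proof -
  have ne: "{0..<N} \<times> {-1, 1::real} \<noteq> {}" using assms by auto
  have "({0..<N} \<times> {-1, 1::real}) \<inter> {y. fst y = i} = {i} \<times> {-1, 1}" using assms by auto
  moreover have "card ({0..<N} \<times> {-1, 1::real}) = 2 * N" by (simp add: card_cartesian_product)
  ultimately show ?thesis using measure_pmf_of_set[OF ne] by (simp add: card_cartesian_product)
qed

lemma prob1:
  assumes "N \<ge> 1" "i < N"
  shows "measure_pmf.prob (th_law N K) {\<omega>. dcnt K i \<omega> = a} = gg 1 N K a 0"
proof -
  have "measure_pmf.prob (th_law N K) {f. card {k\<in>{..<K}. f k \<in> {y. fst y = i}} = a \<and> card {k\<in>{..<K}. f k \<in> {}} = 0}
     = real (card {..<K} choose a) * real ((card {..<K} - a) choose 0) * (1 / real N) ^ a * 0 ^ 0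
        * (1 - 1 / real N - 0) ^ (card {..<K} - a - 0)"
    unfolding th_law_def
    by (subst count2) (auto simp: base_measure[OF assms])
  moreover have "{f. card {k\<in>{..<K}. f k \<in> {y. fst y = i}} = a \<and> card {k\<in>{..<K}. f k \<in> ({}::(nat\<times>real) set)} = 0}
     = {\<omega>. dcnt K i \<omega> = a}" unfolding dcnt_def by auto
  ultimately show ?thesis unfolding gg_def by simp
qed

lemma prob2:
  assumes "N \<ge> 1" "i < N" "j < N" "i \<noteq> j"
  shows "measure_pmf.prob (th_law N K) {\<omega>. dcnt K i \<omega> = a \<and> dcnt K j \<omega> = b} = gg 2 N K a b"
proof -
  have d: "{y::nat\<times>real. fst y = i} \<inter> {y. fst y = j} = {}" using assms by auto
  have "measure_pmf.prob (th_law N K) {f. card {k\<in>{..<K}. f k \<in> {y. fst y = i}} = a \<and> card {k\<in>{..<K}. f k \<in> {y. fst y = j}} = b}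
     = real (card {..<K} choose a) * real ((card {..<K} - a) choose b) * (1 / real N) ^ a * (1 / real N) ^ b
        * (1 - 1 / real N - 1 / real N) ^ (card {..<K} - a - b)"
    unfolding th_law_def
    by (subst count2[OF _ d]) (auto simp: base_measure[OF assms(1,2)] base_measure[OF assms(1,3)])
  moreover have "{f. card {k\<in>{..<K}. f k \<in> {y. fst y = i}} = a \<and> card {k\<in>{..<K}. f k \<in> {y::nat\<times>real. fst y = j}} = b}
     = {\<omega>. dcnt K i \<omega> = a \<and> dcnt K j \<omega> = b}" unfolding dcnt_def by auto
  ultimately show ?thesis unfolding gg_def by (simp add: power_add)
qed

lemma set_th_law:
  assumes "\<omega> \<in> set_pmf (th_law N K)" "N \<ge> 1" "k < K"
  shows "fst (\<omega> k) < N" "snd (\<omega> k) = 1 \<or> snd (\<omega> k) = -1"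
proof -
  have fin: "finite ({0..<N} \<times> {-1, 1::real})" by auto
  have ne: "{0..<N} \<times> {-1, 1::real} \<noteq> {}" using assms by auto
  have "\<omega> \<in> PiE_dflt {..<K} (0, 1) (\<lambda>_. {0..<N} \<times> {-1, 1})"
    using assms(1) unfolding th_law_def by (subst (asm) set_Pi_pmf) (auto simp: set_pmf_of_set[OF ne fin] o_def)
  hence "\<omega> k \<in> {0..<N} \<times> {-1, 1}" using assms(3) unfolding PiE_dflt_def by auto
  thus "fst (\<omega> k) < N" "snd (\<omega> k) = 1 \<or> snd (\<omega> k) = -1" by auto
qed

lemma finite_th_law: "N \<ge> 1 \<Longrightarrow> finite (set_pmf (th_law N K))"
proof -
  assume N: "N \<ge> 1"
  have fin: "finite ({0..<N} \<times> {-1, 1::real})" by auto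
  have ne: "{0..<N} \<times> {-1, 1::real} \<noteq> {}" using N by auto
  show ?thesis unfolding th_law_def
    by (subst set_Pi_pmf) (auto simp: set_pmf_of_set[OF ne fin] o_def intro!: finite_PiE_dflt)
qed

lemma esd_th:
  assumes N: "N \<ge> 1" and om: "\<omega> \<in> set_pmf (th_law N K)"
  shows "esd N (th_matrix N K \<omega> * transpose_mat (th_matrix N K \<omega>)) x
       = (\<Sum>i<N. if real (dcnt K i \<omega>) \<le> x then 1 else 0) / real N"
proof -
  define S where "S = th_matrix N K \<omega>"
  have Sc: "S \<in> carrier_mat N K" unfolding S_def th_matrix_def by simp
  have SSc: "S * transpose_mat S \<in> carrier_mat N N" using Sc by simp
  have ent: "(S * transpose_mat S) $$ (i,j) = (\<Sum>k\<in>{0..<K}. S $$ (i,k) * S $$ (j,k))" if "i < N" "j < N" for i j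
    using that Sc by (simp add: scalar_prod_def)
  have Sij: "S $$ (i,k) = (if fst (\<omega> k) = i then snd (\<omega> k) else 0)" if "i < N" "k < K" for i k
    using that unfolding S_def th_matrix_def by simp
  have off: "(S * transpose_mat S) $$ (i,j) = 0" if "i < N" "j < N" "i \<noteq> j" for i j
    using that by (auto simp: ent Sij intro!: sum.neutral)
  have diag: "(S * transpose_mat S) $$ (i,i) = real (dcnt K i \<omega>)" if "i < N" for i
  proof -
    have "(S * transpose_mat S) $$ (i,i) = (\<Sum>k\<in>{0..<K}. if fst (\<omega> k) = i then 1 else 0)"
      unfolding ent[OF that that]
    proof (intro sum.cong refl)
      fix k assume "k \<in> {0..<K}"
      hence "k < K" by simp
      have "snd (\<omega> k) = 1 \<or> snd (\<omega> k) = -1" using set_th_law(2)[OF om N \<open>k < K\<close>] .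
      then show "S $$ (i, k) * S $$ (i, k) = (if fst (\<omega> k) = i then 1 else 0)"
        using Sij[OF that \<open>k < K\<close>] by auto
    qed
    also have "\<dots> = real (card {k \<in> {..<K}. fst (\<omega> k) = i})"
      by (simp add: sum.If_cases atLeast0LessThan Int_def)
    finally show ?thesis unfolding dcnt_def .
  qed
  have "esd N (S * transpose_mat S) x = (\<Sum>i<N. if (S * transpose_mat S) $$ (i,i) \<le> x then 1 else 0) / real N"
    by (rule esd_diag[OF SSc off])
  also have "\<dots> = (\<Sum>i<N. if real (dcnt K i \<omega>) \<le> x then 1 else 0) / real N"
    by (simp add: diag)
  finally show ?thesis unfolding S_def .
qed

context
  fixes \<beta> :: real and K :: "nat \<Rightarrow> nat"
  assumes bpos: "\<beta> > 0" and lim: "(\<lambda>N. real (K N) / real N) \<longlonglongrightarrow> \<beta>"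
begin

lemma K_large: "eventually (\<lambda>N. real (K N) \<ge> m) sequentially"
proof -
  have e1: "eventually (\<lambda>N. real (K N) / real N > \<beta> / 2) sequentially"
    using order_tendstoD(1)[OF lim, of "\<beta>/2"] bpos by simp
  have e2: "eventually (\<lambda>N. real N > 2 * m / \<beta>) sequentially"
    using filterlim_real_sequentially filterlim_at_top_dense by blast
  show ?thesis using e1 e2 eventually_gt_at_top[of 0]
  proof eventually_elim
    case (elim N)
    have Np: "real N > 0" using elim(3) by simp
    hence "real (K N) > \<beta> / 2 * real N" using elim(1) by (simp add: field_simps)
    moreover have "\<beta> / 2 * real N > m" using elim(2) bpos by (simp add: field_simps)
    ultimately show ?case by linarith
  qed
qed

lemma lim_gchoose: "(\<lambda>N. ((real (K N) - s) gchoose b) / real N ^ b) \<longlonglongrightarrow> \<beta> ^ b / fact b"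
proof -
  have eq: "eventually (\<lambda>N. (\<Prod>i\<in>{0..<b}. real (K N) / real N - (s + real i) / real N) / fact b
       = ((real (K N) - s) gchoose b) / real N ^ b) sequentially"
    using eventually_gt_at_top[of 0]
  proof eventually_elim
    case (elim N)
    have "((real (K N) - s) gchoose b) = (\<Prod>i\<in>{0..<b}. real (K N) - s - real i) / fact b"
      using gbinomial_mult_fact'[of "real (K N) - s" b] by (simp add: field_simps)
    moreover have "(\<Prod>i\<in>{0..<b}. real (K N) / real N - (s + real i) / real N)
         = (\<Prod>i\<in>{0..<b}. (real (K N) - s - real i) / real N)"
      using elim by (intro prod.cong refl) (simp add: field_simps)
    moreover have "(\<Prod>i\<in>{0..<b}. (real (K N) - s - real i) / real N) = (\<Prod>i\<in>{0..<b}. real (K N) - s - real i) / real N ^ b"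
      by (simp add: prod_dividef)
    ultimately show ?case by simp
  qed
  have "(\<lambda>N. (\<Prod>i\<in>{0..<b}. real (K N) / real N - (s + real i) / real N) / fact b) \<longlonglongrightarrow> (\<Prod>i\<in>{0..<b}. \<beta> - 0) / fact b"
    by (intro tendsto_intros lim) auto
  hence "(\<lambda>N. (\<Prod>i\<in>{0..<b}. real (K N) / real N - (s + real i) / real N) / fact b) \<longlonglongrightarrow> \<beta> ^ b / fact b"
    by simp
  then show ?thesis using tendsto_cong[OF eq] by simp
qed

lemma lim_pow: "(\<lambda>N. (1 - c / real N) ^ K N) \<longlonglongrightarrow> exp (- c * \<beta>)"
proof -
  have eq: "eventually (\<lambda>N. ((1 + (-c) / real N) ^ N) powr (real (K N) / real N) = (1 - c / real N) ^ K N) sequentially"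
    using eventually_gt_at_top[of "nat \<lceil>\<bar>c\<bar>\<rceil>"]
  proof eventually_elim
    case (elim N)
    have Nc: "real N > \<bar>c\<bar>" using elim by linarith
    hence pos: "1 + (-c) / real N > 0" by (simp add: field_simps abs_if split: if_splits)
    have Np: "real N > 0" using Nc by linarith
    have "((1 + (-c) / real N) ^ N) powr (real (K N) / real N)
        = ((1 + (-c) / real N) powr real N) powr (real (K N) / real N)"
      using pos by (simp add: powr_realpow)
    also have "\<dots> = (1 + (-c) / real N) powr real (K N)"
      using Np by (simp add: powr_powr)
    also have "\<dots> = (1 - c / real N) ^ K N" using pos by (simp add: powr_realpow)
    finally show ?case .
  qed
  have "(\<lambda>N. ((1 + (-c) / real N) ^ N) powr (real (K N) / real N)) \<longlonglongrightarrow> exp (-c) powr \<beta>"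
    by (rule tendsto_powr[OF tendsto_exp_limit_sequentially lim]) simp
  moreover have "exp (-c) powr \<beta> = exp (- c * \<beta>)" by (simp add: powr_def)
  ultimately show ?thesis using tendsto_cong[OF eq] by simp
qed

lemma lim_gg: "(\<lambda>N. gg c N (K N) a b) \<longlonglongrightarrow> \<beta> ^ (a + b) * exp (- c * \<beta>) / (fact a * fact b)"
proof -
  define h where "h = (\<lambda>N. ((real (K N) - 0) gchoose a) / real N ^ a * (((real (K N) - real a) gchoose b) / real N ^ b)
      * (1 - c / real N) ^ K N / (1 - c / real N) ^ (a + b))"
  have eq: "eventually (\<lambda>N. h N = gg c N (K N) a b) sequentially"
    using K_large[of "real (a + b)"] eventually_gt_at_top[of "nat \<lceil>\<bar>c\<bar>\<rceil>"]
  proof eventually_elim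
    case (elim N)
    have Nc: "real N > \<bar>c\<bar>" using elim by linarith
    hence nz: "1 - c / real N \<noteq> 0" by (simp add: field_simps abs_if split: if_splits)
    have Np: "real N > 0" using Nc by linarith
    have Ka: "a + b \<le> K N" using elim by linarith
    have c1: "real (K N choose a) = (real (K N) - 0) gchoose a" by (simp add: binomial_gbinomial)
    have c2: "real ((K N - a) choose b) = (real (K N) - real a) gchoose b"
      using Ka by (simp add: binomial_gbinomial of_nat_diff)
    have p: "(1 - c / real N) ^ (K N - a - b) = (1 - c / real N) ^ K N / (1 - c / real N) ^ (a + b)"
      using Ka nz by (simp add: power_diff diff_diff_left)
    show ?case unfolding h_def gg_def c1 c2 p using Np
      by (simp add: power_add field_simps)
  qed
  have "h \<longlonglongrightarrow> \<beta> ^ a / fact a * (\<beta> ^ b / fact b) * exp (- c * \<beta>) / (1 - 0) ^ (a + b)"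
    unfolding h_def
    by (intro tendsto_intros lim_gchoose lim_pow lim_const_over_n) simp
  moreover have "\<beta> ^ a / fact a * (\<beta> ^ b / fact b) * exp (- c * \<beta>) / (1 - 0) ^ (a + b)
      = \<beta> ^ (a + b) * exp (- c * \<beta>) / (fact a * fact b)" by (simp add: power_add)
  ultimately show ?thesis using tendsto_cong[OF eq] by simp
qed

end

lemma prob_dcnt_M:
  assumes "N \<ge> 1" "i < N" "finite M"
  shows "measure_pmf.prob (th_law N K) {\<omega>. dcnt K i \<omega> \<in> M} = (\<Sum>a\<in>M. gg 1 N K a 0)"
proof -
  have "measure_pmf.prob (th_law N K) {\<omega>. dcnt K i \<omega> \<in> M} = measure_pmf.prob (map_pmf (dcnt K i) (th_law N K)) M"
    by (simp add: vimage_def)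
  also have "\<dots> = (\<Sum>a\<in>M. pmf (map_pmf (dcnt K i) (th_law N K)) a)"
    by (rule measure_measure_pmf_finite[OF assms(3)])
  also have "\<dots> = (\<Sum>a\<in>M. gg 1 N K a 0)"
    by (intro sum.cong refl) (simp add: pmf_map vimage_def prob1[OF assms(1,2)])
  finally show ?thesis .
qed

lemma prob_dcnt_MM:
  assumes "N \<ge> 1" "i < N" "j < N" "i \<noteq> j" "finite M"
  shows "measure_pmf.prob (th_law N K) {\<omega>. dcnt K i \<omega> \<in> M \<and> dcnt K j \<omega> \<in> M} = (\<Sum>ab\<in>M\<times>M. gg 2 N K (fst ab) (snd ab))"
proof -
  have "measure_pmf.prob (th_law N K) {\<omega>. dcnt K i \<omega> \<in> M \<and> dcnt K j \<omega> \<in> M}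
       = measure_pmf.prob (map_pmf (\<lambda>\<omega>. (dcnt K i \<omega>, dcnt K j \<omega>)) (th_law N K)) (M \<times> M)"
    by (simp add: vimage_def)
  also have "\<dots> = (\<Sum>ab\<in>M\<times>M. pmf (map_pmf (\<lambda>\<omega>. (dcnt K i \<omega>, dcnt K j \<omega>)) (th_law N K)) ab)"
    by (rule measure_measure_pmf_finite) (use assms(5) in auto)
  also have "\<dots> = (\<Sum>ab\<in>M\<times>M. gg 2 N K (fst ab) (snd ab))"
  proof (intro sum.cong refl)
    fix ab :: "nat \<times> nat"
    have "(\<lambda>\<omega>. (dcnt K i \<omega>, dcnt K j \<omega>)) -` {ab} = {\<omega>. dcnt K i \<omega> = fst ab \<and> dcnt K j \<omega> = snd ab}"
      by (cases ab) auto
    then show "pmf (map_pmf (\<lambda>\<omega>. (dcnt K i \<omega>, dcnt K j \<omega>)) (th_law N K)) ab = gg 2 N K (fst ab) (snd ab)"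
      by (simp add: pmf_map prob2[OF assms(1-4)])
  qed
  finally show ?thesis .
qed

lemma bound:
  fixes N K :: nat and x c \<epsilon> :: real
  assumes N: "N \<ge> 1" and eps: "\<epsilon> > 0" and finM: "finite M" and M: "M = {a::nat. real a \<le> x}"
  defines "pp \<equiv> (\<Sum>a\<in>M. gg 1 N K a 0)"
  defines "qq \<equiv> (\<Sum>ab\<in>M\<times>M. gg 2 N K (fst ab) (snd ab))"
  shows "measure_pmf.prob (th_law N K)
            {\<omega>. \<bar>esd N (th_matrix N K \<omega> * transpose_mat (th_matrix N K \<omega>)) x - c\<bar> > \<epsilon>}
         \<le> (pp / real N + (1 - 1 / real N) * qq - 2 * c * pp + c ^ 2) / \<epsilon> ^ 2"
proof -
  define \<mu> where "\<mu> = th_law N K"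
  have fin: "finite (set_pmf \<mu>)" unfolding \<mu>_def by (rule finite_th_law[OF N])
  note intg = integrable_measure_pmf_finite[OF fin]
  define ind where "ind = (\<lambda>i \<omega>. if real (dcnt K i \<omega>) \<le> x then 1 else (0::real))"
  define F where "F = (\<lambda>\<omega>. (\<Sum>i<N. ind i \<omega>) / real N)"
  have Np: "real N > 0" using N by simp
  have s1: "measure_pmf.prob \<mu> {\<omega>. \<bar>esd N (th_matrix N K \<omega> * transpose_mat (th_matrix N K \<omega>)) x - c\<bar> > \<epsilon>}
      = measure_pmf.prob \<mu> {\<omega>. \<bar>F \<omega> - c\<bar> > \<epsilon>}"
  proof -
    have "{\<omega>. \<bar>esd N (th_matrix N K \<omega> * transpose_mat (th_matrix N K \<omega>)) x - c\<bar> > \<epsilon>} \<inter> set_pmf \<mu>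
        = {\<omega>. \<bar>F \<omega> - c\<bar> > \<epsilon>} \<inter> set_pmf \<mu>"
    proof -
      have "esd N (th_matrix N K \<omega> * transpose_mat (th_matrix N K \<omega>)) x = F \<omega>" if "\<omega> \<in> set_pmf \<mu>" for \<omega>
        using esd_th[OF N, of \<omega> K x] that unfolding F_def ind_def \<mu>_def by simp
      then show ?thesis by auto
    qed
    then have "measure_pmf.prob \<mu> ({\<omega>. \<bar>esd N (th_matrix N K \<omega> * transpose_mat (th_matrix N K \<omega>)) x - c\<bar> > \<epsilon>} \<inter> set_pmf \<mu>)
        = measure_pmf.prob \<mu> ({\<omega>. \<bar>F \<omega> - c\<bar> > \<epsilon>} \<inter> set_pmf \<mu>)" by simp
    then show ?thesis by (simp add: measure_Int_set_pmf)
  qed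
  have s2: "\<epsilon> ^ 2 * measure_pmf.prob \<mu> {\<omega>. \<bar>F \<omega> - c\<bar> > \<epsilon>} \<le> (\<integral>\<omega>. (F \<omega> - c) ^ 2 \<partial>\<mu>)"
  proof -
    have "\<epsilon> ^ 2 * measure_pmf.prob \<mu> {\<omega>. \<bar>F \<omega> - c\<bar> > \<epsilon>} = (\<integral>\<omega>. \<epsilon> ^ 2 * indicator {\<omega>. \<bar>F \<omega> - c\<bar> > \<epsilon>} \<omega> \<partial>\<mu>)"
      by simp
    also have "\<dots> \<le> (\<integral>\<omega>. (F \<omega> - c) ^ 2 \<partial>\<mu>)"
    proof (rule integral_mono[OF intg intg])
      fix \<omega>
      show "\<epsilon> ^ 2 * indicator {\<omega>. \<bar>F \<omega> - c\<bar> > \<epsilon>} \<omega> \<le> (F \<omega> - c) ^ 2"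
      proof (cases "\<bar>F \<omega> - c\<bar> > \<epsilon>")
        case True
        hence "\<epsilon> ^ 2 \<le> \<bar>F \<omega> - c\<bar> ^ 2" using eps by (intro power_mono) auto
        then show ?thesis using True by simp
      qed simp
    qed
    finally show ?thesis .
  qed
  have ind_int: "(\<integral>\<omega>. ind i \<omega> \<partial>\<mu>) = pp" if "i < N" for i
  proof -
    have "(\<lambda>\<omega>. ind i \<omega>) = indicator {\<omega>. dcnt K i \<omega> \<in> M}" unfolding ind_def M by (auto simp: indicator_def)
    hence "(\<integral>\<omega>. ind i \<omega> \<partial>\<mu>) = measure_pmf.prob \<mu> {\<omega>. dcnt K i \<omega> \<in> M}" by simp
    thus ?thesis unfolding pp_def \<mu>_def using prob_dcnt_M[OF N that finM] by simp
  qed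
  have EF: "(\<integral>\<omega>. F \<omega> \<partial>\<mu>) = pp"
  proof -
    have "(\<integral>\<omega>. F \<omega> \<partial>\<mu>) = (\<integral>\<omega>. (\<Sum>i<N. ind i \<omega>) \<partial>\<mu>) / real N" unfolding F_def by simp
    also have "(\<integral>\<omega>. (\<Sum>i<N. ind i \<omega>) \<partial>\<mu>) = (\<Sum>i<N. (\<integral>\<omega>. ind i \<omega> \<partial>\<mu>))"
      by (simp add: integral_sum intg)
    also have "\<dots> = real N * pp" using ind_int by simp
    finally show ?thesis using Np by simp
  qed
  have pair_int: "(\<integral>\<omega>. ind i \<omega> * ind j \<omega> \<partial>\<mu>) = (if i = j then pp else qq)" if "i < N" "j < N" for i j
  proof (cases "i = j")
    case True
    have "(\<lambda>\<omega>. ind i \<omega> * ind j \<omega>) = ind i" using True unfolding ind_def by auto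
    then show ?thesis using ind_int[OF that(1)] True by simp
  next
    case False
    have "(\<lambda>\<omega>. ind i \<omega> * ind j \<omega>) = indicator {\<omega>. dcnt K i \<omega> \<in> M \<and> dcnt K j \<omega> \<in> M}"
      unfolding ind_def M by (auto simp: indicator_def)
    hence "(\<integral>\<omega>. ind i \<omega> * ind j \<omega> \<partial>\<mu>) = measure_pmf.prob \<mu> {\<omega>. dcnt K i \<omega> \<in> M \<and> dcnt K j \<omega> \<in> M}" by simp
    thus ?thesis unfolding qq_def \<mu>_def using prob_dcnt_MM[OF N that False finM] False by simp
  qed
  have rowsum: "(\<Sum>j<N. if i = j then pp else qq) = pp + (real N - 1) * qq" if "i < N" for i
  proof -
    have "(\<Sum>j<N. if i = j then pp else qq) = (\<Sum>j<N. qq + (if i = j then pp - qq else 0))"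
      by (intro sum.cong refl) auto
    also have "\<dots> = real N * qq + (pp - qq)" using that by (simp add: sum.distrib)
    finally show ?thesis by (simp add: algebra_simps)
  qed
  have EF2: "(\<integral>\<omega>. F \<omega> ^ 2 \<partial>\<mu>) = pp / real N + (1 - 1 / real N) * qq"
  proof -
    have "(\<lambda>\<omega>. F \<omega> ^ 2) = (\<lambda>\<omega>. (\<Sum>i<N. \<Sum>j<N. ind i \<omega> * ind j \<omega>) / real N ^ 2)"
      unfolding F_def by (auto simp: power2_eq_square sum_product)
    hence "(\<integral>\<omega>. F \<omega> ^ 2 \<partial>\<mu>) = (\<integral>\<omega>. (\<Sum>i<N. \<Sum>j<N. ind i \<omega> * ind j \<omega>) \<partial>\<mu>) / real N ^ 2" by simp
    also have "(\<integral>\<omega>. (\<Sum>i<N. \<Sum>j<N. ind i \<omega> * ind j \<omega>) \<partial>\<mu>) = (\<Sum>i<N. \<Sum>j<N. (\<integral>\<omega>. ind i \<omega> * ind j \<omega> \<partial>\<mu>))"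
      by (simp add: integral_sum intg)
    also have "\<dots> = (\<Sum>i<N. pp + (real N - 1) * qq)"
      by (intro sum.cong refl) (simp add: pair_int rowsum)
    also have "\<dots> = real N * (pp + (real N - 1) * qq)" by simp
    also have "real N * (pp + (real N - 1) * qq) / real N ^ 2 = (pp + (real N - 1) * qq) / real N"
      using Np by (simp add: power2_eq_square)
    also have "\<dots> = pp / real N + (1 - 1 / real N) * qq" using Np by (simp add: field_simps)
    finally show ?thesis .
  qed
  have E2: "(\<integral>\<omega>. (F \<omega> - c) ^ 2 \<partial>\<mu>) = (\<integral>\<omega>. F \<omega> ^ 2 \<partial>\<mu>) - 2 * c * (\<integral>\<omega>. F \<omega> \<partial>\<mu>) + c ^ 2"
  proof -
    have "(\<lambda>\<omega>. (F \<omega> - c) ^ 2) = (\<lambda>\<omega>. F \<omega> ^ 2 - 2 * c * F \<omega> + c ^ 2)"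
      by (auto simp: power2_eq_square algebra_simps)
    then show ?thesis by (simp add: intg)
  qed
  have X: "(\<integral>\<omega>. (F \<omega> - c) ^ 2 \<partial>\<mu>) = pp / real N + (1 - 1 / real N) * qq - 2 * c * pp + c ^ 2"
    unfolding E2 EF EF2 ..
  have "measure_pmf.prob \<mu> {\<omega>. \<bar>F \<omega> - c\<bar> > \<epsilon>} \<le> (pp / real N + (1 - 1 / real N) * qq - 2 * c * pp + c ^ 2) / \<epsilon> ^ 2"
    using s2 eps unfolding X by (simp add: field_simps)
  then show ?thesis using s1 unfolding \<mu>_def by simp
qed


theorem corollary1:
  fixes \<beta> :: real and K :: "nat \<Rightarrow> nat" and x :: real
  assumes "\<beta> > 0"
    and "\<And>N. N \<ge> 1 \<Longrightarrow> K N \<ge> 1"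
    and "(\<lambda>N. real (K N) / real N) \<longlonglongrightarrow> \<beta>"
  shows "\<forall>\<epsilon>>0. (\<lambda>N. measure_pmf.prob (th_law N (K N))
            {\<omega>. \<bar>esd N (th_matrix N (K N) \<omega> * transpose_mat (th_matrix N (K N) \<omega>)) x
                  - poisson_cdf \<beta> x\<bar> > \<epsilon>}) \<longlonglongrightarrow> 0"
proof (intro allI impI)
  fix \<epsilon> :: real assume eps: "\<epsilon> > 0"
  define M where "M = {a::nat. real a \<le> x}"
  have finM: "finite M"
  proof (rule finite_subset[of M "{..nat \<lceil>x\<rceil>}"])
    show "M \<subseteq> {..nat \<lceil>x\<rceil>}"
    proof
      fix a assume "a \<in> M"
      hence "real a \<le> x" unfolding M_def by simp
      hence "real a \<le> real_of_int \<lceil>x\<rceil>" using le_of_int_ceiling order_trans by blast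
      hence "int a \<le> \<lceil>x\<rceil>" by linarith
      thus "a \<in> {..nat \<lceil>x\<rceil>}" by simp
    qed
  qed simp
  define c where "c = poisson_cdf \<beta> x"
  define f where "f = (\<lambda>a::nat. \<beta> ^ a * exp (- \<beta>) / fact a)"
  have c_eq: "c = (\<Sum>a\<in>M. f a)"
  proof -
    have "c = (\<Sum>a\<in>M. if real a \<le> x then \<beta> ^ a * exp (- \<beta>) / fact a else 0)"
      unfolding c_def poisson_cdf_def by (rule suminf_finite[OF finM]) (simp add: M_def)
    also have "\<dots> = (\<Sum>a\<in>M. f a)" by (intro sum.cong refl) (simp add: M_def f_def)
    finally show ?thesis .
  qed
  define p where "p = (\<lambda>N. (\<Sum>a\<in>M. gg 1 N (K N) a 0))"
  define q where "q = (\<lambda>N. (\<Sum>ab\<in>M\<times>M. gg 2 N (K N) (fst ab) (snd ab)))"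
  have plim: "p \<longlonglongrightarrow> c"
  proof -
    have "p \<longlonglongrightarrow> (\<Sum>a\<in>M. \<beta> ^ (a + 0) * exp (- 1 * \<beta>) / (fact a * fact 0))"
      unfolding p_def by (intro tendsto_sum lim_gg[OF assms(1,3)])
    thus ?thesis unfolding c_eq f_def by simp
  qed
  have qlim: "q \<longlonglongrightarrow> c ^ 2"
  proof -
    have "q \<longlonglongrightarrow> (\<Sum>ab\<in>M\<times>M. \<beta> ^ (fst ab + snd ab) * exp (- 2 * \<beta>) / (fact (fst ab) * fact (snd ab)))"
      unfolding q_def by (intro tendsto_sum lim_gg[OF assms(1,3)])
    moreover have "(\<Sum>ab\<in>M\<times>M. \<beta> ^ (fst ab + snd ab) * exp (- 2 * \<beta>) / (fact (fst ab) * fact (snd ab))) = c ^ 2"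
    proof -
      have "c ^ 2 = (\<Sum>a\<in>M. \<Sum>b\<in>M. f a * f b)" unfolding c_eq power2_eq_square sum_product ..
      also have "\<dots> = (\<Sum>ab\<in>M\<times>M. f (fst ab) * f (snd ab))" by (simp add: sum.cartesian_product case_prod_beta)
      also have "\<dots> = (\<Sum>ab\<in>M\<times>M. \<beta> ^ (fst ab + snd ab) * exp (- 2 * \<beta>) / (fact (fst ab) * fact (snd ab)))"
      proof (intro sum.cong refl)
        fix ab :: "nat \<times> nat"
        have "exp (- \<beta>) * exp (- \<beta>) = exp (- 2 * \<beta>)" by (simp add: mult_exp_exp)
        then show "f (fst ab) * f (snd ab) = \<beta> ^ (fst ab + snd ab) * exp (- 2 * \<beta>) / (fact (fst ab) * fact (snd ab))"
          unfolding f_def by (simp add: power_add field_simps)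
      qed
      finally show ?thesis by simp
    qed
    ultimately show ?thesis by simp
  qed
  have pN: "(\<lambda>N. p N / real N) \<longlonglongrightarrow> 0"
    using tendsto_mult[OF plim lim_1_over_n] by simp
  have h: "(\<lambda>N. (p N / real N + (1 - 1 / real N) * q N - 2 * c * p N + c ^ 2) / \<epsilon> ^ 2) \<longlonglongrightarrow>
      (0 + (1 - 0) * c ^ 2 - 2 * c * c + c ^ 2) / \<epsilon> ^ 2"
    using eps by (intro tendsto_intros pN qlim plim lim_1_over_n) simp
  hence h0: "(\<lambda>N. (p N / real N + (1 - 1 / real N) * q N - 2 * c * p N + c ^ 2) / \<epsilon> ^ 2) \<longlonglongrightarrow> 0"
    by (simp add: power2_eq_square)
  have ev: "eventually (\<lambda>N. measure_pmf.prob (th_law N (K N))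
            {\<omega>. \<bar>esd N (th_matrix N (K N) \<omega> * transpose_mat (th_matrix N (K N) \<omega>)) x - c\<bar> > \<epsilon>}
         \<le> (p N / real N + (1 - 1 / real N) * q N - 2 * c * p N + c ^ 2) / \<epsilon> ^ 2) sequentially"
    using eventually_ge_at_top[of 1]
  proof eventually_elim
    case (elim N)
    show ?case unfolding p_def q_def by (rule bound[OF elim eps finM M_def])
  qed
  show "(\<lambda>N. measure_pmf.prob (th_law N (K N))
            {\<omega>. \<bar>esd N (th_matrix N (K N) \<omega> * transpose_mat (th_matrix N (K N) \<omega>)) x
                  - poisson_cdf \<beta> x\<bar> > \<epsilon>}) \<longlonglongrightarrow> 0"
    unfolding c_def[symmetric]
    by (rule tendsto_sandwich[OF _ ev tendsto_const h0]) simp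
qed

end
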